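(* For every integer $m\ge 1$, the number of admissible sequences of length $m-1$ equals the Catalan number $C_m=\frac{1}{m+1}\binom{2m}{m}$.
   Context: A finite sequence of integers $\mathbf a=(a_1,\dots,a_n)$ is admissible if it is strictly increasing and $2i-1\le a_i\le 2n$ for all $1\le i\le n$ (the empty sequence, $n=0$, is admissible). *)

theory Defs
  imports Main
begin

text \<open>A finite integer sequence a = (a_1,...,a_n) is represented as a list xs of length n,
  with a_i = xs ! (i - 1).\<close>
definition admissible :: "int list \<Rightarrow> bool" where
  "admissible xs \<longleftrightarrow>
     sorted_wrt (<) xs \<and>
     (\<forall>i\<in>{1..length xs}. 2 * int i - 1 \<le> xs ! (i - 1) \<and> xs ! (i - 1) \<le> 2 * int (length xs))"

end

theory Submission
  imports Defs
begin

fun G :: "nat \<Rightarrow> nat \<Rightarrow> nat" where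
  "G 0 k = (if k = 0 then 1 else 0)"
| "G (Suc t) 0 = 1"
| "G (Suc t) (Suc k) = G t (Suc k) + (if 2 * k \<le> t then G t k else 0)"

definition bm :: "nat \<Rightarrow> nat \<Rightarrow> nat" where
  "bm t k = (if 2 \<le> k then t choose (k - 2) else 0)"

lemma G_zero: "t + 1 < 2 * k \<Longrightarrow> G t k = 0"
proof (induction t arbitrary: k)
  case 0 then show ?case by simp
next
  case (Suc t)
  then obtain k' where k: "k = Suc k'" by (cases k) auto
  show ?case using Suc k by auto
qed

lemma bm_Suc: "bm (Suc t) (Suc k) = bm t (Suc k) + bm t k"
proof (cases k)
  case 0 then show ?thesis by (simp add: bm_def)
next
  case (Suc j)
  then show ?thesis
    by (cases j) (auto simp: bm_def)
qed

lemma G_closed: "2 * k \<le> t + 1 \<Longrightarrow> G t k + bm t k = t choose k"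
proof (induction t arbitrary: k)
  case 0 then show ?case by (cases k) (auto simp: bm_def)
next
  case (Suc t)
  show ?case
  proof (cases k)
    case 0 then show ?thesis by (simp add: bm_def)
  next
    case (Suc k')
    have IH1: "G t k' + bm t k' = t choose k'" using Suc.IH Suc.prems Suc by auto
    have "G t (Suc k') + bm t (Suc k') = t choose Suc k'"
    proof (cases "2 * Suc k' \<le> t + 1")
      case True then show ?thesis using Suc.IH by blast
    next
      case False
      then have t: "t = 2 * k'" using Suc.prems Suc by auto
      have "G t (Suc k') = 0" using False G_zero by auto
      moreover have "t choose Suc k' = bm t (Suc k')"
      proof (cases k')
        case 0 then show ?thesis using t by (simp add: bm_def)
      next
        case (Suc j)
        have "t choose Suc k' = t choose (t - Suc k')"
          using binomial_symmetric[of "Suc k'" t] t Suc by auto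
        then show ?thesis using t Suc by (simp add: bm_def)
      qed
      ultimately show ?thesis by simp
    qed
    moreover have "2 * k' \<le> t" using Suc.prems Suc by auto
    ultimately show ?thesis using IH1 Suc bm_Suc[of t k'] by simp
  qed
qed

definition Lset :: "nat \<Rightarrow> nat \<Rightarrow> int list set" where
  "Lset t k = {xs. length xs = k \<and> sorted_wrt (<) xs \<and> (\<forall>i<k. 2 * int i + 1 \<le> xs ! i)
      \<and> (\<forall>x\<in>set xs. x \<le> int t)}"

lemma Lset_0: "Lset t 0 = {[]}"
  by (auto simp: Lset_def)

lemma Lset_zero_Suc: "Lset 0 (Suc k) = {}"
proof -
  { fix xs assume "xs \<in> Lset 0 (Suc k)"
    then have "1 \<le> xs ! 0" "xs ! 0 \<in> set xs" "\<forall>x\<in>set xs. x \<le> 0"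
      by (auto simp: Lset_def)
    then have False by auto }
  then show ?thesis by auto
qed

lemma Lset_Suc_Suc:
  "Lset (Suc t) (Suc k) = Lset t (Suc k) \<union>
     (if 2 * k \<le> t then (\<lambda>ys. ys @ [int (Suc t)]) ` Lset t k else {})"
proof (intro equalityI subsetI)
  fix xs assume xs: "xs \<in> Lset (Suc t) (Suc k)"
  then have len: "length xs = Suc k" and so: "sorted_wrt (<) xs"
    and lo: "\<forall>i<Suc k. 2 * int i + 1 \<le> xs ! i" and hi: "\<forall>x\<in>set xs. x \<le> int (Suc t)"
    by (auto simp: Lset_def)
  obtain ys y where ys: "xs = ys @ [y]" using len by (metis length_Suc_conv_rev rev_eq_Cons_iff)
  have lys: "length ys = k" using len ys by simp
  have yl: "\<forall>x\<in>set ys. x < y" using so ys by (simp add: sorted_wrt_append)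
  show "xs \<in> Lset t (Suc k) \<union>
     (if 2 * k \<le> t then (\<lambda>ys. ys @ [int (Suc t)]) ` Lset t k else {})"
  proof (cases "y \<le> int t")
    case True
    then have "\<forall>x\<in>set xs. x \<le> int t" using yl ys by force
    then show ?thesis using len so lo by (auto simp: Lset_def)
  next
    case False
    then have y: "y = int (Suc t)" using hi ys by force
    have "2 * int k + 1 \<le> xs ! k" using lo by simp
    then have k: "2 * k \<le> t" using ys lys y by (simp add: nth_append)
    have "ys \<in> Lset t k"
      unfolding Lset_def
    proof (intro CollectI conjI)
      show "length ys = k" by fact
      show "sorted_wrt (<) ys" using so ys by (simp add: sorted_wrt_append)
      show "\<forall>i<k. 2 * int i + 1 \<le> ys ! i"
      proof (intro allI impI)
        fix i assume "i < k"
        then show "2 * int i + 1 \<le> ys ! i" using lo ys lys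
          by (metis less_Suc_eq nth_append_left)
      qed
      show "\<forall>x\<in>set ys. x \<le> int t" using yl y by force
    qed
    then show ?thesis using k ys y by auto
  qed
next
  fix xs assume xs: "xs \<in> Lset t (Suc k) \<union>
     (if 2 * k \<le> t then (\<lambda>ys. ys @ [int (Suc t)]) ` Lset t k else {})"
  show "xs \<in> Lset (Suc t) (Suc k)"
  proof (cases "xs \<in> Lset t (Suc k)")
    case True then show ?thesis by (force simp: Lset_def)
  next
    case False
    then obtain ys where k: "2 * k \<le> t" and ys: "ys \<in> Lset t k" and xs: "xs = ys @ [int (Suc t)]"
      using xs by (auto split: if_splits)
    from ys have len: "length ys = k" and so: "sorted_wrt (<) ys"
      and lo: "\<forall>i<k. 2 * int i + 1 \<le> ys ! i" and hi: "\<forall>x\<in>set ys. x \<le> int t"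
      by (auto simp: Lset_def)
    show ?thesis
      unfolding Lset_def
    proof (intro CollectI conjI)
      show "length xs = Suc k" using xs len by simp
      show "sorted_wrt (<) xs" using xs so hi by (force simp: sorted_wrt_append)
      show "\<forall>i<Suc k. 2 * int i + 1 \<le> xs ! i"
      proof (intro allI impI)
        fix i assume i: "i < Suc k"
        show "2 * int i + 1 \<le> xs ! i"
        proof (cases "i < k")
          case True then show ?thesis using lo xs len by (simp add: nth_append)
        next
          case False then have "i = k" using i by simp
          then show ?thesis using xs len k by (simp add: nth_append)
        qed
      qed
      show "\<forall>x\<in>set xs. x \<le> int (Suc t)" using xs hi by force
    qed
  qed
qed

lemma card_Lset: "card (Lset t k) = G t k \<and> finite (Lset t k)"
proof (induction t arbitrary: k)
  case 0
  then show ?case by (cases k) (auto simp: Lset_0 Lset_zero_Suc)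
next
  case (Suc t)
  show ?case
  proof (cases k)
    case 0 then show ?thesis by (simp add: Lset_0)
  next
    case (Suc k')
    have disj: "Lset t (Suc k') \<inter> (\<lambda>ys. ys @ [int (Suc t)]) ` Lset t k' = {}"
      by (auto simp: Lset_def)
    have inj: "inj_on (\<lambda>ys. ys @ [int (Suc t)]) (Lset t k')"
      by (auto simp: inj_on_def)
    show ?thesis
      using Suc.IH[of "Suc k'"] Suc.IH[of k'] disj inj
      by (auto simp: Suc Lset_Suc_Suc card_Un_disjoint card_image)
  qed
qed

lemma adm_Lset: "{xs :: int list. length xs = n \<and> admissible xs} = Lset (2 * n) n"
proof (intro equalityI subsetI)
  fix xs assume "xs \<in> {xs :: int list. length xs = n \<and> admissible xs}"
  then have len: "length xs = n" and so: "sorted_wrt (<) xs"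
    and c: "\<forall>i\<in>{1..n}. 2 * int i - 1 \<le> xs ! (i - 1) \<and> xs ! (i - 1) \<le> 2 * int n"
    by (auto simp: admissible_def)
  have lo: "\<forall>i<n. 2 * int i + 1 \<le> xs ! i"
  proof (intro allI impI)
    fix i assume "i < n"
    then have "Suc i \<in> {1..n}" by simp
    then show "2 * int i + 1 \<le> xs ! i" using c by fastforce
  qed
  have hi: "\<forall>x\<in>set xs. x \<le> int (2 * n)"
  proof
    fix x assume "x \<in> set xs"
    then obtain i where i: "i < n" "x = xs ! i" using len by (auto simp: in_set_conv_nth)
    then have "Suc i \<in> {1..n}" by simp
    then show "x \<le> int (2 * n)" using c i by fastforce
  qed
  show "xs \<in> Lset (2 * n) n" using len so lo hi by (simp add: Lset_def)
next
  fix xs assume "xs \<in> Lset (2 * n) n"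
  then have len: "length xs = n" and so: "sorted_wrt (<) xs"
      and lo: "\<forall>i<n. 2 * int i + 1 \<le> xs ! i" and hi: "\<forall>x\<in>set xs. x \<le> int (2 * n)"
    by (auto simp: Lset_def)
  have "\<forall>i\<in>{1..n}. 2 * int i - 1 \<le> xs ! (i - 1) \<and> xs ! (i - 1) \<le> 2 * int n"
  proof
    fix i assume i: "i \<in> {1..n}"
    then have i1: "i - 1 < n" by auto
    have "2 * int (i - 1) + 1 \<le> xs ! (i - 1)" using lo i1 by blast
    moreover have "xs ! (i - 1) \<in> set xs" using i1 len by simp
    ultimately show "2 * int i - 1 \<le> xs ! (i - 1) \<and> xs ! (i - 1) \<le> 2 * int n"
      using hi i by force
  qed
  then show "xs \<in> {xs :: int list. length xs = n \<and> admissible xs}"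
    using len so by (simp add: admissible_def)
qed

lemma absorb: "Suc k * (N choose Suc k) = (N - k) * (N choose k)"
  using binomial_absorption[of k N] binomial_absorb_comp[of N k] by simp

lemma L1: "n * (n - 1) * ((2 * n) choose n) = (n + 1) * (n + 2) * bm (2 * n) n"
proof (cases "n < 2")
  case True then show ?thesis by (cases n) (auto simp: bm_def)
next
  case False
  then obtain j where n: "n = j + 2" by (metis add.commute le_Suc_ex not_less)
  define N where "N = 2 * j + 4"
  have a: "(j + 1) * (N choose (j + 1)) = (j + 4) * (N choose j)"
    using absorb[of j N] N_def by simp
  have b: "(j + 2) * (N choose (j + 2)) = (j + 3) * (N choose (j + 1))"
    using absorb[of "Suc j" N] N_def by simp
  have "(j + 2) * (j + 1) * (N choose (j + 2)) = (j + 1) * ((j + 3) * (N choose (j + 1)))"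
    using b by (metis mult.assoc mult.commute)
  also have "\<dots> = (j + 3) * ((j + 4) * (N choose j))" using a by (metis mult.left_commute)
  finally have c: "(j + 2) * (j + 1) * (N choose (j + 2)) = (j + 3) * ((j + 4) * (N choose j))" .
  have e1: "bm (2 * n) n = N choose j" using n N_def by (auto simp: bm_def eval_nat_numeral)
  have e: "2 * n = N" "n - 1 = j + 1" using n N_def by auto
  show ?thesis unfolding e1 unfolding e using c n by (simp only: ac_simps) (simp add: algebra_simps del: binomial_Suc_Suc)
qed

lemma L2: "(n + 1) * ((2 * n + 2) choose (n + 1)) = 2 * (2 * n + 1) * ((2 * n) choose n)"
proof -
  have 1: "(n + 1) * ((2 * n + 2) choose (n + 1)) = (2 * n + 2) * ((2 * n + 1) choose n)"
    using Suc_times_binomial[of n "2 * n + 1"] by simp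
  have 2: "(2 * n + 1) * ((2 * n) choose n) = ((2 * n + 1) choose (n + 1)) * (n + 1)"
    using Suc_times_binomial_eq[of "2 * n" n] by simp
  have 3: "(2 * n + 1) choose n = (2 * n + 1) choose (n + 1)"
    using binomial_symmetric[of n "2 * n + 1"] by simp
  show ?thesis using 1 2 3 by (simp add: algebra_simps)
qed

lemma fin: "(n + 2) * Gv = D" if g: "Gv + B = C" and l1: "n * (n - 1) * C = (n + 1) * (n + 2) * B"
  and l2: "(n + 1) * D = 2 * (2 * n + 1) * C" for n Gv B C D :: nat
proof -
  have gi: "int Gv = int C - int B" using g by simp
  have l1i: "int n * (int n - 1) * int C = (int n + 1) * (int n + 2) * int B"
  proof (cases n)
    case 0 then show ?thesis using l1 by simp
  next
    case (Suc k)
    have h: "int (n * (n - 1) * C) = int ((n + 1) * (n + 2) * B)" using l1 by (rule arg_cong)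
    have "int (n - 1) = int n - 1" using Suc by simp
    then show ?thesis using h by (simp only: of_nat_mult of_nat_add of_nat_1 of_nat_numeral)
  qed
  have l2i: "(int n + 1) * int D = 2 * (2 * int n + 1) * int C" using l2
    by (metis (mono_tags, lifting) of_nat_1 of_nat_add of_nat_mult of_nat_numeral)
  have "(int n + 1) * ((int n + 2) * int Gv) = (int n + 1) * (int n + 2) * int C - (int n + 1) * (int n + 2) * int B"
    by (simp add: gi algebra_simps)
  also have "\<dots> = (int n + 1) * (int n + 2) * int C - int n * (int n - 1) * int C" using l1i by simp
  also have "\<dots> = 2 * (2 * int n + 1) * int C" by (simp add: algebra_simps)
  also have "\<dots> = (int n + 1) * int D" using l2i by simp
  finally have "(int n + 1) * ((int n + 2) * int Gv) = (int n + 1) * int D" .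
  then have "(int n + 2) * int Gv = int D" by simp
  then show ?thesis by (metis of_nat_add of_nat_mult of_nat_numeral of_nat_eq_iff)
qed

theorem mainTheorem6:
  fixes m :: nat
  assumes "m \<ge> 1"
  shows "card {xs :: int list. length xs = m - 1 \<and> admissible xs} = ((2 * m) choose m) div (m + 1)"
proof -
  define n where "n = m - 1"
  have m: "m = n + 1" using assms n_def by simp
  have c: "card {xs :: int list. length xs = m - 1 \<and> admissible xs} = G (2 * n) n"
    using card_Lset adm_Lset n_def by simp
  have g: "G (2 * n) n + bm (2 * n) n = (2 * n) choose n" using G_closed by simp
  have "(n + 2) * G (2 * n) n = (2 * n + 2) choose (n + 1)"
    using fin[OF g L1 L2] by (simp add: add.commute)
  then have "((2 * m) choose m) div (m + 1) = G (2 * n) n"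
  proof -
    have "(2 * m) choose m = (n + 2) * G (2 * n) n" using m \<open>(n + 2) * G (2 * n) n = _\<close> by simp
    moreover have "m + 1 = n + 2" using m by simp
    ultimately show ?thesis by (metis nonzero_mult_div_cancel_left add_2_eq_Suc' nat.distinct(1))
  qed
  then show ?thesis using c by simp
qed

end
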